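(* Let $a$ and $b$ be relatively prime integers with $1<a<b$, let $(u,v)$ be the definitely least solution of $ax+by=1$, and let $S=\langle a,b\rangle$. If $I_{i,a}(S)\neq\varnothing$ for some $i\in\{1,\dots,a-1\}$ and $h_i=\min I_{i,a}(S)$, then $I_{i,a}(S)=\{h_i,h_i+a,\dots,h_i+(|u|-1)a\}$.
   Context: $\langle a,b\rangle=\{\lambda_1a+\lambda_2b:\lambda_1,\lambda_2\in\mathbb{N}\}$. $I(S)$ is the set of isolated gaps of $S$ ($x\in\mathbb{N}\setminus S$ with $x-1,x+1\in S$), and $I_{i,a}(S)=\{s\in I(S):s\equiv i\pmod a\}$. The definitely least solution $(u,v)$ of $ax+by=1$ is the unique integer solution with $|u|,|v|$ minimal; equivalently the one with $|u|\le b/2$, $|v|\le a/2$. *)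

theory Defs
  imports Main
begin

definition gen2 :: "nat \<Rightarrow> nat \<Rightarrow> nat set" where
  "gen2 a b = {l1 * a + l2 * b | l1 l2. True}"

definition isolated_gaps :: "nat set \<Rightarrow> nat set" where
  "isolated_gaps S = {x. 0 < x \<and> x \<notin> S \<and> x - 1 \<in> S \<and> x + 1 \<in> S}"

definition isolated_gaps_mod :: "nat set \<Rightarrow> nat \<Rightarrow> nat \<Rightarrow> nat set" where
  "isolated_gaps_mod S i a = {s \<in> isolated_gaps S. s mod a = i mod a}"

definition definitely_least_solution :: "int \<Rightarrow> int \<Rightarrow> int \<Rightarrow> int \<Rightarrow> bool" where
  "definitely_least_solution a b u v \<longleftrightarrow>
     a * u + b * v = 1 \<and> 2 * \<bar>u\<bar> \<le> b \<and> 2 * \<bar>v\<bar> \<le> a"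

end

theory Submission imports Defs begin

lemma mem_iff:
  fixes a b n :: nat and u v :: int
  assumes uv: "int a * u + int b * v = 1" and a0: "0 < a"
  shows "n \<in> gen2 a b \<longleftrightarrow> int n \<ge> ((int n * v) mod int a) * int b"
proof
  assume "n \<in> gen2 a b"
  then obtain l1 l2 where n: "n = l1 * a + l2 * b" unfolding gen2_def by blast
  have "int n * v = int l2 * (int a * u + int b * v) + int a * (int l1 * v - int l2 * u)"
    unfolding n by (simp add: algebra_simps)
  then have "int n * v = int l2 + int a * (int l1 * v - int l2 * u)" using uv by simp
  then have "(int n * v) mod int a = int l2 mod int a" by simp
  also have "\<dots> \<le> int l2" using a0 by (simp add: zmod_le_nonneg_dividend)
  finally have "(int n * v) mod int a * int b \<le> int l2 * int b" by (simp add: mult_right_mono)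
  also have "\<dots> \<le> int n" unfolding n by simp
  finally show "int n \<ge> ((int n * v) mod int a) * int b" .
next
  assume h: "int n \<ge> ((int n * v) mod int a) * int b"
  define y where "y = (int n * v) mod int a"
  define q where "q = (int n * v) div int a"
  have y0: "0 \<le> y" using a0 unfolding y_def by simp
  have nv: "int n * v = q * int a + y" unfolding y_def q_def by simp
  have e: "int n - y * int b = int a * (int n * u + int b * q)"
  proof -
    have "int n - y * int b = int n * (int a * u + int b * v) - y * int b" using uv by simp
    also have "\<dots> = int a * (int n * u + int b * q)" using arg_cong[OF nv, of "\<lambda>t. t * int b"] by (simp add: algebra_simps)
    finally show ?thesis .
  qed
  define l1 where "l1 = int n * u + int b * q"
  have "int a * l1 \<ge> 0" using h e unfolding l1_def y_def by simp
  then have l1: "l1 \<ge> 0" using a0 by (simp add: zero_le_mult_iff)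
  have "int n = int (nat l1 * a + nat y * b)" using e l1 y0 unfolding l1_def by (simp add: algebra_simps)
  then have "n = nat l1 * a + nat y * b" by linarith
  then show "n \<in> gen2 a b" unfolding gen2_def by blast
qed


theorem proposition4p7:
  fixes a b i :: nat and u v :: int
  assumes "coprime a b" and "1 < a" and "a < b"
    and "definitely_least_solution (int a) (int b) u v"
    and "1 \<le> i" and "i \<le> a - 1"
    and "isolated_gaps_mod (gen2 a b) i a \<noteq> {}"
  shows "isolated_gaps_mod (gen2 a b) i a =
           {Min (isolated_gaps_mod (gen2 a b) i a) + k * a | k. k < nat \<bar>u\<bar>}"
proof -
  define A where "A = int a"
  define B where "B = int b"
  define I where "I = isolated_gaps_mod (gen2 a b) i a"
  have A1: "A > 1" and AB: "A < B" using assms(2,3) unfolding A_def B_def by auto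
  have uv: "A * u + B * v = 1" and hu: "2 * \<bar>u\<bar> \<le> B" and hv: "2 * \<bar>v\<bar> \<le> A"
    using assms(4) unfolding definitely_least_solution_def A_def B_def by auto
  have ia: "i < a" using assms(2,6) by simp
  define y0 where "y0 = (int i * v) mod A"
  define c1 where "c1 = (y0 + v) mod A"
  define c2 where "c2 = (y0 - v) mod A"
  have y0r: "0 \<le> y0" "y0 < A" using A1 unfolding y0_def by auto
  have c1r: "0 \<le> c1" "c1 < A" using A1 unfolding c1_def by auto
  have c2r: "0 \<le> c2" "c2 < A" using A1 unfolding c2_def by auto
  have memS: "n \<in> gen2 a b \<longleftrightarrow> int n \<ge> ((int n * v) mod A) * B" for n
    using mem_iff[of a u b v n] uv assms(2) unfolding A_def B_def by auto
  have modn: "(int n * v) mod A = y0" if "n mod a = i" for n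
  proof -
    have "int n mod A = int i" using that unfolding A_def by (metis of_nat_mod)
    then show ?thesis unfolding y0_def by (metis mod_mult_left_eq)
  qed
  have key: "n \<in> I \<longleftrightarrow> (0 < n \<and> n mod a = i \<and> int n < y0 * B \<and> int n + 1 \<ge> c1 * B \<and> int n - 1 \<ge> c2 * B)" for n
  proof (cases "n mod a = i \<and> 0 < n")
    case True
    have e0: "(int n * v) mod A = y0" using True modn by blast
    have e1: "(int (n+1) * v) mod A = c1"
    proof -
      have "int (n+1) * v = int n * v + v" by (simp add: algebra_simps)
      then have "(int (n+1) * v) mod A = ((int n * v) mod A + v) mod A" by (simp add: mod_add_left_eq)
      then show ?thesis using e0 unfolding c1_def by simp
    qed
    have e2: "(int (n-1) * v) mod A = c2"
    proof -
      have "int (n-1) * v = int n * v - v" using True by (simp add: of_nat_diff algebra_simps)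
      then have "(int (n-1) * v) mod A = ((int n * v) mod A - v) mod A" by (simp add: mod_diff_left_eq)
      then show ?thesis using e0 unfolding c2_def by simp
    qed
    show ?thesis unfolding I_def isolated_gaps_mod_def isolated_gaps_def memS
      using True e0 e1 e2 ia by (auto simp: of_nat_diff)
  next
    case False
    then show ?thesis unfolding I_def isolated_gaps_mod_def isolated_gaps_def using ia by auto
  qed
  have y0B: "(y0 * B) mod A = int i"
  proof -
    have "(y0 * B) mod A = (int i * v * B) mod A" unfolding y0_def by (metis mod_mult_left_eq)
    also have "int i * v * B = int i * (A * u + B * v) + A * (- int i * u)" by (simp add: algebra_simps)
    also have "\<dots> = int i + A * (- int i * u)" using uv by simp
    also have "(int i + A * (- int i * u)) mod A = int i mod A"
      by (metis mod_mult_self2 mult.commute)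
    also have "int i mod A = int i" using ia unfolding A_def by (simp add: of_nat_mod[symmetric])
    finally show ?thesis .
  qed
  have rep: "(n mod a = i \<and> int n < y0 * B) \<longleftrightarrow> (\<exists>k\<ge>1. int n = y0 * B - k * A)" for n
  proof
    assume h: "n mod a = i \<and> int n < y0 * B"
    have "int n mod A = int i" using h unfolding A_def by (metis of_nat_mod)
    then have "A dvd (y0 * B - int n)" using y0B by (metis mod_eq_dvd_iff)
    then obtain k where k: "y0 * B - int n = A * k" by blast
    have "A * k > 0" using k h by simp
    then have "k \<ge> 1" using A1 by (simp add: zero_less_mult_iff)
    then show "\<exists>k\<ge>1. int n = y0 * B - k * A" using k by (intro exI[of _ k]) (auto simp: algebra_simps)
  next
    assume "\<exists>k\<ge>1. int n = y0 * B - k * A"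
    then obtain k where k: "k \<ge> 1" "int n = y0 * B - k * A" by blast
    have "int n = y0 * B + (-k) * A" using k by simp
    then have "int n mod A = (y0 * B) mod A" by (metis mod_mult_self1)
    then have "int n mod A = int i" using y0B by simp
    then have "n mod a = i" unfolding A_def by (metis of_nat_eq_iff of_nat_mod)
    moreover have "k * A > 0" using k A1 by simp
    ultimately show "n mod a = i \<and> int n < y0 * B" using k by simp
  qed
  obtain n0 where n0: "n0 \<in> I" using assms(7) unfolding I_def by blast
  obtain k0 where k0: "k0 \<ge> 1" "int n0 = y0 * B - k0 * A" using n0 key rep by blast
  have n0a: "int n0 < y0 * B" "int n0 + 1 \<ge> c1 * B" "int n0 - 1 \<ge> c2 * B" using n0 key by auto
  have uvc: "u * A + v * B = 1" using uv by (simp add: algebra_simps)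
  have B2: "B \<ge> 2" using A1 AB by simp
  have cond: "(0 < y0 * B - k * A \<and> y0 * B - k * A + 1 \<ge> c1 * B \<and> y0 * B - k * A - 1 \<ge> c2 * B)
     \<longleftrightarrow> k \<le> \<bar>u\<bar>" if k1: "k \<ge> 1" for k
  proof (cases "v > 0")
    case True
    have "1 * B \<le> v * B" by (rule mult_right_mono) (use True AB A1 in auto)
    then have vB: "v * B \<ge> B" by simp
    have "u * A < 0" using uvc vB B2 by linarith
    then have u0: "u < 0" using A1 by (simp add: mult_less_0_iff)
    have vA: "2 * v \<le> A" using hv True by simp
    have s1: "y0 + v \<ge> A"
    proof (rule ccontr)
      assume "\<not> y0 + v \<ge> A"
      then have "c1 = y0 + v" unfolding c1_def using y0r True by (intro mod_pos_pos_trivial) linarith+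
      then have "c1 * B = y0 * B + v * B" by (simp add: ring_distribs)
      then show False using n0a vB B2 by linarith
    qed
    have F1: "c1 * B = y0 * B + v * B - A * B"
    proof -
      have "(y0 + v) mod A = (y0 + v - A) mod A" using mod_add_self2[of "y0 + v - A" A] by simp
      also have "\<dots> = y0 + v - A" using s1 y0r vA True by (intro mod_pos_pos_trivial) linarith+
      finally have "c1 = y0 + v - A" unfolding c1_def .
      then show ?thesis by (simp add: ring_distribs)
    qed
    have s2: "y0 \<ge> v"
    proof (rule ccontr)
      assume "\<not> y0 \<ge> v"
      then have "(y0 - v) mod A = (y0 - v + A) mod A" using mod_add_self2[of "y0 - v" A] by simp
      also have "\<dots> = y0 - v + A" using \<open>\<not> y0 \<ge> v\<close> y0r vA True by (intro mod_pos_pos_trivial) linarith+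
      finally have "c2 = y0 - v + A" unfolding c2_def .
      then have "c2 * B = y0 * B + (A - v) * B" by (simp add: ring_distribs)
      moreover have "(A - v) * B > 0" using vA True AB A1 by (intro mult_pos_pos) auto
      ultimately show False using n0a by linarith
    qed
    have "c2 = y0 - v" unfolding c2_def using s2 y0r True vA by (intro mod_pos_pos_trivial) linarith+
    then have F2: "c2 * B = y0 * B - v * B" by (simp add: ring_distribs)
    have F3: "u * A + v * B = 1" using uv by (simp add: algebra_simps)
    have "(2 * v) * B \<le> A * B" by (rule mult_right_mono) (use vA AB A1 in auto)
    then have F5: "2 * (v * B) \<le> A * B" by (simp add: mult.assoc)
    have F6: "v * B \<le> y0 * B" using s2 AB A1 by (simp add: mult_right_mono)
    have au: "\<bar>u\<bar> = - u" using u0 by simp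
    show ?thesis
    proof
      assume h: "0 < y0 * B - k * A \<and> y0 * B - k * A + 1 \<ge> c1 * B \<and> y0 * B - k * A - 1 \<ge> c2 * B"
      then have "k * A \<le> - (u * A)" using F2 F3 by linarith
      then have "k * A \<le> (- u) * A" by simp
      then have "k \<le> - u" by (rule mult_right_le_imp_le) (use A1 in auto)
      then show "k \<le> \<bar>u\<bar>" using au by simp
    next
      assume "k \<le> \<bar>u\<bar>"
      then have "k \<le> - u" using au by simp
      then have "k * A \<le> (- u) * A" by (rule mult_right_mono) (use A1 in auto)
      then have "k * A \<le> - (u * A)" by simp
      then show "0 < y0 * B - k * A \<and> y0 * B - k * A + 1 \<ge> c1 * B \<and> y0 * B - k * A - 1 \<ge> c2 * B"
        using F1 F2 F3 F5 F6 by linarith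
    qed
  next
    case False
    have "v \<noteq> 0"
    proof
      assume "v = 0"
      then have "A * u = 1" using uv by simp
      then show False using A1 pos_zmult_eq_1_iff[of A u] by simp
    qed
    then have v0: "v < 0" using False by simp
    have "1 * B \<le> (- v) * B" by (rule mult_right_mono) (use v0 AB A1 in auto)
    then have vB: "- v * B \<ge> B" by simp
    have "u * A > 0" using uvc vB B2 by linarith
    then have u0: "u > 0" using A1 by (simp add: zero_less_mult_iff)
    have vA: "- 2 * v \<le> A" using hv v0 by simp
    have s1: "y0 + v \<ge> 0"
    proof (rule ccontr)
      assume a: "\<not> y0 + v \<ge> 0"
      have "(y0 + v) mod A = (y0 + v + A) mod A" using mod_add_self2[of "y0 + v" A] by simp
      also have "\<dots> = y0 + v + A" using a y0r vA v0 by (intro mod_pos_pos_trivial) linarith+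
      finally have "c1 = y0 + v + A" unfolding c1_def .
      then have "c1 * B = y0 * B + (v + A) * B" by (simp add: ring_distribs)
      moreover have "(v + A) * B \<ge> 1 * B" by (rule mult_right_mono) (use vA v0 AB A1 in auto)
      ultimately show False using n0a B2 by linarith
    qed
    have "c1 = y0 + v" unfolding c1_def using s1 y0r v0 by (intro mod_pos_pos_trivial) linarith+
    then have F1: "c1 * B = y0 * B + v * B" by (simp add: ring_distribs)
    have s2: "y0 - v \<ge> A"
    proof (rule ccontr)
      assume a: "\<not> y0 - v \<ge> A"
      then have "c2 = y0 - v" unfolding c2_def using y0r v0 by (intro mod_pos_pos_trivial) linarith+
      then have "c2 * B = y0 * B - v * B" by (simp add: ring_distribs)
      then show False using n0a vB B2 by linarith
    qed
    have F2: "c2 * B = y0 * B - v * B - A * B"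
    proof -
      have "(y0 - v) mod A = (y0 - v - A) mod A" using mod_add_self2[of "y0 - v - A" A] by simp
      also have "\<dots> = y0 - v - A" using s2 y0r vA v0 by (intro mod_pos_pos_trivial) linarith+
      finally have "c2 = y0 - v - A" unfolding c2_def .
      then show ?thesis by (simp add: ring_distribs)
    qed
    have A2v: "A + 2 * v \<ge> 1"
    proof (rule ccontr)
      assume "\<not> A + 2 * v \<ge> 1"
      then have Ae: "A = - 2 * v" using vA by simp
      have "v * (B - 2 * u) = 1" using uv unfolding Ae by (simp add: algebra_simps)
      moreover have "B - 2 * u \<ge> 0" using hu by simp
      moreover have "v * (B - 2 * u) \<le> 0" using v0 \<open>B - 2 * u \<ge> 0\<close> by (intro mult_nonpos_nonneg) auto
      ultimately show False by simp
    qed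
    have F3: "u * A + v * B = 1" using uv by (simp add: algebra_simps)
    have F5: "A * B + 2 * (v * B) \<ge> B"
    proof -
      have "(A + 2 * v) * B \<ge> 1 * B" by (rule mult_right_mono) (use A2v AB A1 in auto)
      then show ?thesis by (simp add: algebra_simps)
    qed
    have F6: "y0 * B + v * B \<ge> B"
    proof -
      have "(y0 + v) * B \<ge> 1 * B" by (rule mult_right_mono) (use A2v s2 AB A1 in auto)
      then show ?thesis by (simp add: algebra_simps)
    qed
    have au: "\<bar>u\<bar> = u" using u0 by simp
    show ?thesis
    proof
      assume h: "0 < y0 * B - k * A \<and> y0 * B - k * A + 1 \<ge> c1 * B \<and> y0 * B - k * A - 1 \<ge> c2 * B"
      then have "k * A \<le> u * A" using F1 F3 by linarith
      then have "k \<le> u" by (rule mult_right_le_imp_le) (use A1 in auto)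
      then show "k \<le> \<bar>u\<bar>" using au by simp
    next
      assume "k \<le> \<bar>u\<bar>"
      then have "k \<le> u" using au by simp
      then have "k * A \<le> u * A" by (rule mult_right_mono) (use A1 in auto)
      then show "0 < y0 * B - k * A \<and> y0 * B - k * A + 1 \<ge> c1 * B \<and> y0 * B - k * A - 1 \<ge> c2 * B"
        using F1 F2 F3 F5 F6 B2 by linarith
    qed
  qed
  have char: "n \<in> I \<longleftrightarrow> (\<exists>k. 1 \<le> k \<and> k \<le> \<bar>u\<bar> \<and> int n = y0 * B - k * A)" for n
  proof
    assume "n \<in> I"
    then have h: "0 < n" "n mod a = i" "int n < y0 * B" "int n + 1 \<ge> c1 * B" "int n - 1 \<ge> c2 * B"
      using key by auto
    then obtain k where k: "k \<ge> 1" "int n = y0 * B - k * A" using rep by blast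
    then have "k \<le> \<bar>u\<bar>" using cond[OF k(1)] h by auto
    then show "\<exists>k. 1 \<le> k \<and> k \<le> \<bar>u\<bar> \<and> int n = y0 * B - k * A" using k by blast
  next
    assume "\<exists>k. 1 \<le> k \<and> k \<le> \<bar>u\<bar> \<and> int n = y0 * B - k * A"
    then obtain k where k: "1 \<le> k" "k \<le> \<bar>u\<bar>" "int n = y0 * B - k * A" by blast
    have c: "0 < y0 * B - k * A \<and> y0 * B - k * A + 1 \<ge> c1 * B \<and> y0 * B - k * A - 1 \<ge> c2 * B"
      using cond[OF k(1)] k(2) by blast
    have "n mod a = i \<and> int n < y0 * B" using rep k by blast
    then show "n \<in> I" using key c k(3) by auto
  qed
  have pos: "0 < y0 * B - k * A" if "1 \<le> k" "k \<le> \<bar>u\<bar>" for k using cond that by blast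
  have u1: "\<bar>u\<bar> \<ge> 1" using char[of n0] n0 by auto
  define m where "m = nat (y0 * B - \<bar>u\<bar> * A)"
  have im: "int m = y0 * B - \<bar>u\<bar> * A" using pos[of "\<bar>u\<bar>"] u1 unfolding m_def by simp
  have mI: "m \<in> I" using char[of m] im u1 by auto
  have mle: "m \<le> n" if "n \<in> I" for n
  proof -
    have "\<exists>k. 1 \<le> k \<and> k \<le> \<bar>u\<bar> \<and> int n = y0 * B - k * A" using char[of n] that by simp
    then obtain k where k: "1 \<le> k" "k \<le> \<bar>u\<bar>" "int n = y0 * B - k * A" by blast
    have "k * A \<le> \<bar>u\<bar> * A" by (rule mult_right_mono) (use k A1 in auto)
    then show ?thesis using k im by linarith
  qed
  have fin: "finite I"
  proof (rule finite_subset)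
    show "I \<subseteq> {..nat (y0 * B)}"
    proof
      fix n assume "n \<in> I"
      then have "int n < y0 * B" using key by blast
      then show "n \<in> {..nat (y0 * B)}" by (simp add: le_nat_iff)
    qed
  qed simp
  have Mn: "Min I = m" by (rule Min_eqI) (use fin mI mle in auto)
  show ?thesis unfolding I_def[symmetric] Mn
  proof (intro set_eqI iffI)
    fix x assume "x \<in> I"
    then have "\<exists>k. 1 \<le> k \<and> k \<le> \<bar>u\<bar> \<and> int x = y0 * B - k * A" using char[of x] by simp
    then obtain k where k: "1 \<le> k" "k \<le> \<bar>u\<bar>" "int x = y0 * B - k * A" by blast
    have "int x = int m + int (nat (\<bar>u\<bar> - k)) * int a" using k im unfolding A_def
      by (simp add: algebra_simps)
    then have "int x = int (m + nat (\<bar>u\<bar> - k) * a)" by simp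
    then have "x = m + nat (\<bar>u\<bar> - k) * a" by (simp only: of_nat_eq_iff)
    moreover have "nat (\<bar>u\<bar> - k) < nat \<bar>u\<bar>" using k by simp
    ultimately show "x \<in> {m + k * a |k. k < nat \<bar>u\<bar>}" by blast
  next
    fix x assume "x \<in> {m + k * a |k. k < nat \<bar>u\<bar>}"
    then obtain k where k: "k < nat \<bar>u\<bar>" "x = m + k * a" by blast
    have "int x = y0 * B - (\<bar>u\<bar> - int k) * A" using k im unfolding A_def by (simp add: algebra_simps)
    moreover have "1 \<le> \<bar>u\<bar> - int k" "\<bar>u\<bar> - int k \<le> \<bar>u\<bar>" using k by auto
    ultimately show "x \<in> I" using char[of x] by blast
  qed
qed
end
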